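(* Let $A\in\mathbb{R}_+^{n\times n}$ and let $x\in\mathbb{R}_+^n$ be a Perron eigenvector of $A$ normalized so that $\sum_{i=1}^n x_i=1$. (i) If for all $i,j,k$, $x_k<x_j$ implies $a_{i,k}\le a_{i,j}$, then for every $i$: $\frac{1}{n}\sum_{j=1}^n a_{i,j}\le\sum_{j=1}^n a_{i,j}x_j=\rho(A)x_i$. (ii) If for all $i,j,k$, $x_k<x_j$ implies $a_{i,k}\ge a_{i,j}$, then for every $i$: $\frac{1}{n}\sum_{j=1}^n a_{i,j}\ge\sum_{j=1}^n a_{i,j}x_j=\rho(A)x_i$. (iii) If one of the hypotheses of (i) or (ii) holds, then the following are equivalent: (a) $\frac{1}{n}\sum_{j=1}^n a_{i,j}=\sum_{j=1}^n a_{i,j}x_j=\rho(A)x_i$ for all $i$; (b) either $x_i=\frac1n$ for all $i$, or for each $i$ there is a constant $c_i$ with $a_{i,j}=c_i$ for all $j$.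
   Context: $\mathbb{R}_+^{n\times n}$ and $\mathbb{R}_+^n$ denote nonnegative $n\times n$ matrices and nonnegative vectors. $\rho(A)$ is the spectral radius (Perron root) of $A$; a Perron eigenvector is a nonzero nonnegative vector $x$ with $Ax=\rho(A)x$. *)

theory Defs
  imports "Jordan_Normal_Form.Spectral_Radius"
begin

definition perron_root :: "real mat \<Rightarrow> real" where
  "perron_root A = spectral_radius (map_mat complex_of_real A)"

definition perron_eigenvector :: "real mat \<Rightarrow> real vec \<Rightarrow> bool" where
  "perron_eigenvector A x \<longleftrightarrow>
     x \<in> carrier_vec (dim_col A) \<and> x \<noteq> 0\<^sub>v (dim_col A) \<and>
     (\<forall>i < dim_vec x. x $ i \<ge> 0) \<and> A *\<^sub>v x = perron_root A \<cdot>\<^sub>v x"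

end

theory Submission
  imports Defs
begin

lemma cheb_id:
  fixes a x :: "nat \<Rightarrow> real"
  shows "(\<Sum>j<n. \<Sum>k<n. (a j - a k)*(x j - x k)) =
     2*(real n * (\<Sum>j<n. a j * x j) - (\<Sum>j<n. a j)*(\<Sum>j<n. x j))"
proof -
  have e: "\<And>j k. (a j - a k)*(x j - x k) = a j * x j + a k * x k - a j * x k - a k * x j"
    by (simp add: algebra_simps)
  have s1: "(\<Sum>j<n. \<Sum>k<n. a j * x k) = (\<Sum>j<n. a j)*(\<Sum>j<n. x j)"
  proof -
    have "(\<Sum>j<n. \<Sum>k<n. a j * x k) = (\<Sum>j<n. a j * (\<Sum>k<n. x k))"
      by (simp add: sum_distrib_left)
    also have "\<dots> = (\<Sum>j<n. a j)*(\<Sum>j<n. x j)" by (simp add: sum_distrib_right)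
    finally show ?thesis .
  qed
  have s2: "(\<Sum>j<n. \<Sum>k<n. a k * x j) = (\<Sum>j<n. a j)*(\<Sum>j<n. x j)"
  proof -
    have "(\<Sum>j<n. \<Sum>k<n. a k * x j) = (\<Sum>j<n. x j * (\<Sum>k<n. a k))"
      by (simp add: sum_distrib_left mult.commute)
    also have "\<dots> = (\<Sum>j<n. x j)*(\<Sum>j<n. a j)" by (simp add: sum_distrib_right)
    also have "\<dots> = (\<Sum>j<n. a j)*(\<Sum>j<n. x j)" by (rule mult.commute)
    finally show ?thesis .
  qed
  show ?thesis
    unfolding e sum_subtractf sum.distrib s1 s2 by (simp add: sum_distrib_left sum_negf)
qed

lemma aux1: "(S::real) = 2*(m*T - U) \<Longrightarrow> 0 \<le> S \<Longrightarrow> U \<le> m*T" by (simp add: algebra_simps)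
lemma aux2: "(S::real) = 2*(m*T - U) \<Longrightarrow> (U = m*T \<longleftrightarrow> S = 0)" by (auto simp add: algebra_simps)


lemma cheb_le:
  fixes a x :: "nat \<Rightarrow> real"
  assumes mono: "\<forall>j<n. \<forall>k<n. x k < x j \<longrightarrow> a k \<le> a j"
    and s: "(\<Sum>j<n. x j) = 1" and n: "n > 0"
  shows "(1/real n)*(\<Sum>j<n. a j) \<le> (\<Sum>j<n. a j * x j)"
    and "(1/real n)*(\<Sum>j<n. a j) = (\<Sum>j<n. a j * x j) \<longleftrightarrow>
          (\<forall>j<n. \<forall>k<n. (a j - a k)*(x j - x k) = 0)"
proof -
  have nn: "\<And>j k. j<n \<Longrightarrow> k<n \<Longrightarrow> (a j - a k)*(x j - x k) \<ge> 0"
  proof -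
    fix j k assume jk: "j<n" "k<n"
    consider "x k < x j" | "x j < x k" | "x j = x k" by linarith
    then show "(a j - a k)*(x j - x k) \<ge> 0"
    proof cases
      case 1 with mono jk have "a k \<le> a j" by auto
      with 1 show ?thesis by simp
    next
      case 2 with mono jk have "a j \<le> a k" by auto
      with 2 show ?thesis by (simp add: mult_nonpos_nonpos)
    qed simp
  qed
  have id: "(\<Sum>j<n. \<Sum>k<n. (a j - a k)*(x j - x k)) =
     2*(real n * (\<Sum>j<n. a j * x j) - (\<Sum>j<n. a j))"
    using cheb_id[of a x n] s by simp
  have ge: "(\<Sum>j<n. \<Sum>k<n. (a j - a k)*(x j - x k)) \<ge> 0"
    by (intro sum_nonneg) (auto intro: nn)
  have eq1: "(1/real n)*(\<Sum>j<n. a j) \<le> (\<Sum>j<n. a j * x j) \<longleftrightarrow>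
        (\<Sum>j<n. a j) \<le> real n * (\<Sum>j<n. a j * x j)"
    using n by (simp add: field_simps)
  have eq2: "(1/real n)*(\<Sum>j<n. a j) = (\<Sum>j<n. a j * x j) \<longleftrightarrow>
        (\<Sum>j<n. a j) = real n * (\<Sum>j<n. a j * x j)"
    using n by (auto simp add: field_simps)
  show "(1/real n)*(\<Sum>j<n. a j) \<le> (\<Sum>j<n. a j * x j)"
  proof -
    have "(\<Sum>j<n. a j) \<le> real n * (\<Sum>j<n. a j * x j)" using aux1[OF id ge] .
    then show ?thesis using eq1 by blast
  qed
  have "(\<Sum>j<n. \<Sum>k<n. (a j - a k)*(x j - x k)) = 0 \<longleftrightarrow>
      (\<forall>j<n. \<forall>k<n. (a j - a k)*(x j - x k) = 0)"
  proof -
    have inner: "\<And>j. j<n \<Longrightarrow> (\<Sum>k<n. (a j - a k)*(x j - x k)) = 0 \<longleftrightarrow>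
        (\<forall>k<n. (a j - a k)*(x j - x k) = 0)"
      using nn by (subst sum_nonneg_eq_0_iff) auto
    have "(\<Sum>j<n. \<Sum>k<n. (a j - a k)*(x j - x k)) = 0 \<longleftrightarrow>
        (\<forall>j<n. (\<Sum>k<n. (a j - a k)*(x j - x k)) = 0)"
      using nn by (subst sum_nonneg_eq_0_iff) (auto intro!: sum_nonneg)
    then show ?thesis using inner by auto
  qed
  then show "(1/real n)*(\<Sum>j<n. a j) = (\<Sum>j<n. a j * x j) \<longleftrightarrow>
          (\<forall>j<n. \<forall>k<n. (a j - a k)*(x j - x k) = 0)"
  proof -
    have "(\<Sum>j<n. a j) = real n * (\<Sum>j<n. a j * x j) \<longleftrightarrow>
      (\<Sum>j<n. \<Sum>k<n. (a j - a k)*(x j - x k)) = 0" using aux2[OF id] .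
    then show ?thesis using eq2 \<open>_ = 0 \<longleftrightarrow> _\<close> by blast
  qed
qed

lemma cheb_ge:
  fixes a x :: "nat \<Rightarrow> real"
  assumes mono: "\<forall>j<n. \<forall>k<n. x k < x j \<longrightarrow> a k \<ge> a j"
    and s: "(\<Sum>j<n. x j) = 1" and n: "n > 0"
  shows "(1/real n)*(\<Sum>j<n. a j) \<ge> (\<Sum>j<n. a j * x j)"
    and "(1/real n)*(\<Sum>j<n. a j) = (\<Sum>j<n. a j * x j) \<longleftrightarrow>
          (\<forall>j<n. \<forall>k<n. (a j - a k)*(x j - x k) = 0)"
proof -
  have m: "\<forall>j<n. \<forall>k<n. x k < x j \<longrightarrow> - a k \<le> - a j" using mono by simp
  note c = cheb_le[of n x "\<lambda>j. - a j", OF m s n]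
  have e1: "(\<Sum>j<n. - a j) = - (\<Sum>j<n. a j)" by (simp add: sum_negf)
  have e2: "(\<Sum>j<n. - a j * x j) = - (\<Sum>j<n. a j * x j)" by (simp add: sum_negf)
  have e3: "\<And>j k. (- a j - - a k)*(x j - x k) = - ((a j - a k)*(x j - x k))"
    by (simp add: algebra_simps)
  have c1: "(1/real n)*(- (\<Sum>j<n. a j)) \<le> - (\<Sum>j<n. a j * x j)"
    using c(1) unfolding e1 e2 .
  then show "(1/real n)*(\<Sum>j<n. a j) \<ge> (\<Sum>j<n. a j * x j)" by simp
  have c2: "(1/real n)*(- (\<Sum>j<n. a j)) = - (\<Sum>j<n. a j * x j) \<longleftrightarrow>
          (\<forall>j<n. \<forall>k<n. - ((a j - a k)*(x j - x k)) = 0)"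
    using c(2) unfolding e1 e2 e3 .
  then show "(1/real n)*(\<Sum>j<n. a j) = (\<Sum>j<n. a j * x j) \<longleftrightarrow>
          (\<forall>j<n. \<forall>k<n. (a j - a k)*(x j - x k) = 0)" by simp
qed

lemma comb:
  fixes a :: "nat \<Rightarrow> nat \<Rightarrow> real" and x :: "nat \<Rightarrow> real"
  assumes z: "\<forall>i<n. \<forall>j<n. \<forall>k<n. (a i j - a i k)*(x j - x k) = 0"
    and s: "(\<Sum>j<n. x j) = 1"
  shows "(\<forall>i<n. x i = 1 / real n) \<or> (\<forall>i<n. \<exists>c. \<forall>j<n. a i j = c)"
proof (cases "\<forall>j<n. \<forall>k<n. x j = x k")
  case True
  have n: "n > 0" using s by (cases n) simp_all
  have x0: "\<And>j. j<n \<Longrightarrow> x j = x 0" using True n by blast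
  have "(\<Sum>j<n. x j) = (\<Sum>j<n. x 0)" using x0 by (intro sum.cong refl) blast
  then have "real n * x 0 = 1" using s by simp
  then have "x 0 = 1 / real n" using n by (simp add: field_simps)
  then show ?thesis using x0 by metis
next
  case False
  then obtain j0 k0 where jk0: "j0<n" "k0<n" "x j0 \<noteq> x k0" by blast
  have d: "\<And>i j k. i<n \<Longrightarrow> j<n \<Longrightarrow> k<n \<Longrightarrow> x j \<noteq> x k \<Longrightarrow> a i j = a i k"
  proof -
    fix i j k assume h: "i<n" "j<n" "k<n" "x j \<noteq> x k"
    then have "(a i j - a i k)*(x j - x k) = 0" using z by blast
    then show "a i j = a i k" using h(4) by simp
  qed
  have all: "\<And>i j k. i<n \<Longrightarrow> j<n \<Longrightarrow> k<n \<Longrightarrow> a i j = a i k"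
  proof -
    fix i j k assume ijk: "i<n" "j<n" "k<n"
    show "a i j = a i k"
    proof (cases "x j = x k")
      case False then show ?thesis using d ijk by blast
    next
      case True
      have "\<exists>l. l<n \<and> x l \<noteq> x j"
      proof (cases "x j0 = x j")
        case True then show ?thesis using jk0 by (intro exI[of _ k0]) simp
      next
        case False then show ?thesis using jk0 by (intro exI[of _ j0]) simp
      qed
      then obtain l where l: "l<n" "x l \<noteq> x j" by blast
      have "a i j = a i l" using d[of i j l] ijk l by metis
      moreover have "a i k = a i l" using d[of i k l] ijk l True by metis
      ultimately show ?thesis by simp
    qed
  qed
  have "\<forall>i<n. \<exists>c. \<forall>j<n. a i j = c" using all jk0(1) by blast
  then show ?thesis by blast
qed

theorem lemma2p2:
  fixes A :: "real mat" and x :: "real vec" and n :: nat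
  assumes A: "A \<in> carrier_mat n n"
    and nonneg: "\<forall>i<n. \<forall>j<n. A $$ (i, j) \<ge> 0"
    and perron: "perron_eigenvector A x"
    and norm: "(\<Sum>i<n. x $ i) = 1"
  shows
    "((\<forall>i<n. \<forall>j<n. \<forall>k<n. x $ k < x $ j \<longrightarrow> A $$ (i, k) \<le> A $$ (i, j)) \<longrightarrow>
        (\<forall>i<n. (1 / real n) * (\<Sum>j<n. A $$ (i, j)) \<le> (\<Sum>j<n. A $$ (i, j) * x $ j)
               \<and> (\<Sum>j<n. A $$ (i, j) * x $ j) = perron_root A * x $ i))
     \<and> ((\<forall>i<n. \<forall>j<n. \<forall>k<n. x $ k < x $ j \<longrightarrow> A $$ (i, k) \<ge> A $$ (i, j)) \<longrightarrow>
        (\<forall>i<n. (1 / real n) * (\<Sum>j<n. A $$ (i, j)) \<ge> (\<Sum>j<n. A $$ (i, j) * x $ j)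
               \<and> (\<Sum>j<n. A $$ (i, j) * x $ j) = perron_root A * x $ i))
     \<and> (((\<forall>i<n. \<forall>j<n. \<forall>k<n. x $ k < x $ j \<longrightarrow> A $$ (i, k) \<le> A $$ (i, j)) \<or>
          (\<forall>i<n. \<forall>j<n. \<forall>k<n. x $ k < x $ j \<longrightarrow> A $$ (i, k) \<ge> A $$ (i, j))) \<longrightarrow>
        ((\<forall>i<n. (1 / real n) * (\<Sum>j<n. A $$ (i, j)) = (\<Sum>j<n. A $$ (i, j) * x $ j)
               \<and> (\<Sum>j<n. A $$ (i, j) * x $ j) = perron_root A * x $ i)
         \<longleftrightarrow> ((\<forall>i<n. x $ i = 1 / real n) \<or>
              (\<forall>i<n. \<exists>c. \<forall>j<n. A $$ (i, j) = c))))"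
proof -
  have n: "n > 0" using norm by (cases n) auto
  have xc: "x \<in> carrier_vec n" and ev: "A *\<^sub>v x = perron_root A \<cdot>\<^sub>v x"
    using perron A unfolding perron_eigenvector_def by auto
  have eig: "\<And>i. i<n \<Longrightarrow> (\<Sum>j<n. A $$ (i, j) * x $ j) = perron_root A * x $ i"
  proof -
    fix i assume i: "i<n"
    have "(A *\<^sub>v x) $ i = perron_root A * x $ i" using ev i xc by (simp)
    moreover have "(A *\<^sub>v x) $ i = (\<Sum>j<n. A $$ (i, j) * x $ j)"
      using A xc i by (simp add: scalar_prod_def lessThan_atLeast0)
    ultimately show "(\<Sum>j<n. A $$ (i, j) * x $ j) = perron_root A * x $ i" by simp
  qed
  let ?M = "\<forall>i<n. \<forall>j<n. \<forall>k<n. x $ k < x $ j \<longrightarrow> A $$ (i, k) \<le> A $$ (i, j)"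
  let ?N = "\<forall>i<n. \<forall>j<n. \<forall>k<n. x $ k < x $ j \<longrightarrow> A $$ (i, k) \<ge> A $$ (i, j)"
  let ?E = "\<lambda>i. (1 / real n) * (\<Sum>j<n. A $$ (i, j)) = (\<Sum>j<n. A $$ (i, j) * x $ j)"
  let ?Z = "\<lambda>i. \<forall>j<n. \<forall>k<n. (A $$ (i, j) - A $$ (i, k))*(x $ j - x $ k) = 0"
  have P1: "(1 / real n) * (\<Sum>j<n. A $$ (i, j)) \<le> (\<Sum>j<n. A $$ (i, j) * x $ j)"
     and P1e: "?E i \<longleftrightarrow> ?Z i" if M: ?M and i: "i<n" for i
  proof -
    have m: "\<forall>j<n. \<forall>k<n. x $ k < x $ j \<longrightarrow> A $$ (i, k) \<le> A $$ (i, j)" using M i by blast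
    note c = cheb_le[of n "\<lambda>j. x $ j" "\<lambda>j. A $$ (i, j)", OF m norm n]
    show "(1 / real n) * (\<Sum>j<n. A $$ (i, j)) \<le> (\<Sum>j<n. A $$ (i, j) * x $ j)" by (rule c(1))
    show "?E i \<longleftrightarrow> ?Z i" by (rule c(2))
  qed
  have P2: "(1 / real n) * (\<Sum>j<n. A $$ (i, j)) \<ge> (\<Sum>j<n. A $$ (i, j) * x $ j)"
     and P2e: "?E i \<longleftrightarrow> ?Z i" if M: ?N and i: "i<n" for i
  proof -
    have m: "\<forall>j<n. \<forall>k<n. x $ k < x $ j \<longrightarrow> A $$ (i, k) \<ge> A $$ (i, j)" using M i by blast
    note c = cheb_ge[of n "\<lambda>j. x $ j" "\<lambda>j. A $$ (i, j)", OF m norm n]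
    show "(1 / real n) * (\<Sum>j<n. A $$ (i, j)) \<ge> (\<Sum>j<n. A $$ (i, j) * x $ j)" by (rule c(1))
    show "?E i \<longleftrightarrow> ?Z i" by (rule c(2))
  qed
  have P3: "(\<forall>i<n. ?E i) \<longleftrightarrow> (\<forall>i<n. ?Z i)" if MN: "?M \<or> ?N"
  proof -
    have "?E i \<longleftrightarrow> ?Z i" if i: "i<n" for i
      using MN P1e[OF _ i] P2e[OF _ i] by blast
    then show ?thesis by blast
  qed
  have Q: "(\<forall>i<n. \<forall>j<n. \<forall>k<n. (A $$ (i, j) - A $$ (i, k))*(x $ j - x $ k) = 0) \<Longrightarrow>
     (\<forall>i<n. x $ i = 1 / real n) \<or> (\<forall>i<n. \<exists>c. \<forall>j<n. A $$ (i, j) = c)"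
    using comb[of n "\<lambda>i j. A $$ (i, j)" "\<lambda>j. x $ j"] norm by blast
  have R: "(\<forall>i<n. x $ i = 1 / real n) \<or> (\<forall>i<n. \<exists>c. \<forall>j<n. A $$ (i, j) = c) \<Longrightarrow>
     (\<forall>i<n. \<forall>j<n. \<forall>k<n. (A $$ (i, j) - A $$ (i, k))*(x $ j - x $ k) = 0)"
  proof (intro allI impI)
    fix i j k assume h: "(\<forall>i<n. x $ i = 1 / real n) \<or> (\<forall>i<n. \<exists>c. \<forall>j<n. A $$ (i, j) = c)"
      and ijk: "i<n" "j<n" "k<n"
    from h show "(A $$ (i, j) - A $$ (i, k))*(x $ j - x $ k) = 0"
    proof
      assume "\<forall>i<n. x $ i = 1 / real n"
      then have "x $ j = x $ k" using ijk by metis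
      then show ?thesis by simp
    next
      assume "\<forall>i<n. \<exists>c. \<forall>j<n. A $$ (i, j) = c"
      then obtain c where "\<forall>j<n. A $$ (i, j) = c" using ijk by blast
      then have "A $$ (i, j) = A $$ (i, k)" using ijk by metis
      then show ?thesis by simp
    qed
  qed
  show ?thesis
  proof (intro conjI impI)
    show "\<forall>i<n. (1 / real n) * (\<Sum>j<n. A $$ (i, j)) \<le> (\<Sum>j<n. A $$ (i, j) * x $ j)
               \<and> (\<Sum>j<n. A $$ (i, j) * x $ j) = perron_root A * x $ i" if ?M
      using P1[OF that] eig by simp
    show "\<forall>i<n. (1 / real n) * (\<Sum>j<n. A $$ (i, j)) \<ge> (\<Sum>j<n. A $$ (i, j) * x $ j)
               \<and> (\<Sum>j<n. A $$ (i, j) * x $ j) = perron_root A * x $ i" if ?N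
      using P2[OF that] eig by simp
    assume MN: "?M \<or> ?N"
    show "(\<forall>i<n. (1 / real n) * (\<Sum>j<n. A $$ (i, j)) = (\<Sum>j<n. A $$ (i, j) * x $ j)
               \<and> (\<Sum>j<n. A $$ (i, j) * x $ j) = perron_root A * x $ i)
         \<longleftrightarrow> ((\<forall>i<n. x $ i = 1 / real n) \<or>
              (\<forall>i<n. \<exists>c. \<forall>j<n. A $$ (i, j) = c))"
    proof
      assume h: "\<forall>i<n. (1 / real n) * (\<Sum>j<n. A $$ (i, j)) = (\<Sum>j<n. A $$ (i, j) * x $ j)
               \<and> (\<Sum>j<n. A $$ (i, j) * x $ j) = perron_root A * x $ i"
      then show "(\<forall>i<n. x $ i = 1 / real n) \<or> (\<forall>i<n. \<exists>c. \<forall>j<n. A $$ (i, j) = c)"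
        using P3[OF MN] Q by blast
    next
      assume h: "(\<forall>i<n. x $ i = 1 / real n) \<or> (\<forall>i<n. \<exists>c. \<forall>j<n. A $$ (i, j) = c)"
      have "\<forall>i<n. (1 / real n) * (\<Sum>j<n. A $$ (i, j)) = (\<Sum>j<n. A $$ (i, j) * x $ j)"
        using P3[OF MN] R[OF h] by blast
      then show "\<forall>i<n. (1 / real n) * (\<Sum>j<n. A $$ (i, j)) = (\<Sum>j<n. A $$ (i, j) * x $ j)
               \<and> (\<Sum>j<n. A $$ (i, j) * x $ j) = perron_root A * x $ i"
        using eig by blast
    qed
  qed
qed

end
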